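(* For any nonzero proper homogeneous ideal $I$ of a standard graded polynomial ring $A$ over a field, $$\min_{i \ge 1} \operatorname{depth} A/I^i = \min_{i \ge 1} \operatorname{depth} I^{i-1}/I^i.$$
   Context: Convention: $I^0=A$. Depth of a finitely generated graded module is $\min\{i: H^i_{\mathfrak m}(M)\neq0\}$ for the maximal homogeneous ideal $\mathfrak m$ of $A$. *)

theory Defs
  imports "HOL-Library.Poly_Mapping" "HOL-Library.Extended_Nat"
begin

text \<open>The standard graded polynomial ring A = k[X_v | v in 'v] over a field k, with a finite
  linearly ordered type 'v of variables, is the type mpoly below
  (monomials = exponent vectors, polynomials = finitely supported coefficient functions).\<close>

type_synonym ('v, 'k) mpoly = "('v \<Rightarrow>\<^sub>0 nat) \<Rightarrow>\<^sub>0 'k"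

definition Var :: "'v \<Rightarrow> ('v, 'k::comm_ring_1) mpoly" where
  "Var v = Poly_Mapping.single (Poly_Mapping.single v 1) 1"

definition mon_deg :: "('v::finite \<Rightarrow>\<^sub>0 nat) \<Rightarrow> nat" where
  "mon_deg m = (\<Sum>v\<in>UNIV. Poly_Mapping.lookup m v)"

definition hcomp :: "nat \<Rightarrow> ('v::finite, 'k::comm_ring_1) mpoly \<Rightarrow> ('v, 'k) mpoly" where
  "hcomp d f = Abs_poly_mapping (\<lambda>m. if mon_deg m = d then Poly_Mapping.lookup f m else 0)"

definition is_ideal :: "'a::comm_ring_1 set \<Rightarrow> bool" where
  "is_ideal I \<longleftrightarrow> 0 \<in> I \<and> (\<forall>x\<in>I. \<forall>y\<in>I. x + y \<in> I) \<and> (\<forall>a. \<forall>x\<in>I. a * x \<in> I)"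

definition homogeneous_ideal :: "('v::finite, 'k::comm_ring_1) mpoly set \<Rightarrow> bool" where
  "homogeneous_ideal I \<longleftrightarrow> is_ideal I \<and> (\<forall>f\<in>I. \<forall>d. hcomp d f \<in> I)"

definition ideal_gen :: "'a::comm_ring_1 set \<Rightarrow> 'a set" where
  "ideal_gen X = \<Inter>{J. is_ideal J \<and> X \<subseteq> J}"

fun ideal_pow :: "'a::comm_ring_1 set \<Rightarrow> nat \<Rightarrow> 'a set" where
  "ideal_pow I 0 = UNIV"
| "ideal_pow I (Suc i) = ideal_gen {a * b |a b. a \<in> ideal_pow I i \<and> b \<in> I}"

text \<open>Local cohomology H^i_m(M) of the A-module M = N/N' (N' \<subseteq> N ideals), with m = (X_v | v),
  computed by the Cech complex on the variables:
  C^i = \<Oplus>_{|S| = i} M_{x_S}, x_S = \<Prod>_{v\<in>S} X_v, with the usual alternating differential.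
  A cochain is represented with a common exponent k as S \<mapsto> a S / x_S^k (a S \<in> N);
  an element a / x_T^k of M_{x_T} is zero iff x_T^t a \<in> N' for some t.\<close>

definition xS :: "'v set \<Rightarrow> ('v, 'k::comm_ring_1) mpoly" where
  "xS S = (\<Prod>v\<in>S. Var v)"

definition csgn :: "'v::linorder \<Rightarrow> 'v set \<Rightarrow> ('v, 'k::comm_ring_1) mpoly" where
  "csgn v T = (-1) ^ card {w\<in>T. w < v}"

text \<open>Numerator (over x_T^k) of the Cech differential of the cochain S \<mapsto> a S / x_S^k at T.\<close>
definition cech_d :: "('v::{finite,linorder} set \<Rightarrow> ('v, 'k::comm_ring_1) mpoly) \<Rightarrow> nat \<Rightarrow> 'v set
    \<Rightarrow> ('v, 'k) mpoly" where
  "cech_d a k T = (\<Sum>v\<in>T. csgn v T * Var v ^ k * a (T - {v}))"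

definition loc_zero :: "('v, 'k::comm_ring_1) mpoly set \<Rightarrow> 'v set \<Rightarrow> ('v, 'k) mpoly \<Rightarrow> bool" where
  "loc_zero N' T f \<longleftrightarrow> (\<exists>t. xS T ^ t * f \<in> N')"

definition local_cohom_nonzero ::
  "nat \<Rightarrow> ('v::{finite,linorder}, 'k::comm_ring_1) mpoly set \<Rightarrow> ('v, 'k) mpoly set \<Rightarrow> bool" where
  "local_cohom_nonzero i N N' \<longleftrightarrow>
     (\<exists>a k. (\<forall>S. card S = i \<longrightarrow> a S \<in> N)
        \<comment> \<open>cocycle\<close>
        \<and> (\<forall>T. card T = Suc i \<longrightarrow> loc_zero N' T (cech_d a k T))
        \<comment> \<open>not a coboundary\<close>
        \<and> \<not> (\<exists>b l. (\<forall>S. card S + 1 = i \<longrightarrow> b S \<in> N) \<and>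
               (\<forall>S. card S = i \<longrightarrow>
                   loc_zero N' S (xS S ^ l * a S - xS S ^ k * cech_d b l S))))"

definition depth_quot :: "('v::{finite,linorder}, 'k::comm_ring_1) mpoly set \<Rightarrow> ('v, 'k) mpoly set \<Rightarrow> enat" where
  "depth_quot N N' = (if \<exists>i. local_cohom_nonzero i N N'
                      then enat (LEAST i. local_cohom_nonzero i N N') else \<infinity>)"

end

theory Submission
  imports Defs
begin

lemma ideal_mult: "is_ideal J \<Longrightarrow> x \<in> J \<Longrightarrow> y * x \<in> J"
  by (simp add: is_ideal_def)
lemma ideal_mult2: "is_ideal J \<Longrightarrow> x \<in> J \<Longrightarrow> x * y \<in> J"
  by (metis ideal_mult mult.commute)
lemma ideal_add: "is_ideal J \<Longrightarrow> x \<in> J \<Longrightarrow> y \<in> J \<Longrightarrow> x + y \<in> J"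
  by (simp add: is_ideal_def)
lemma ideal_diff: "is_ideal J \<Longrightarrow> x \<in> J \<Longrightarrow> y \<in> J \<Longrightarrow> x - y \<in> J"
proof -
  assume a: "is_ideal J" "x \<in> J" "y \<in> J"
  have "(-1) * y \<in> J" using a ideal_mult by blast
  then have "x + (-1) * y \<in> J" using a ideal_add by blast
  then show ?thesis by simp
qed

lemma loc_zero_mono: "N1 \<subseteq> N2 \<Longrightarrow> loc_zero N1 T f \<Longrightarrow> loc_zero N2 T f"
  unfolding loc_zero_def by blast

lemma loc_zero_mult: "is_ideal N \<Longrightarrow> loc_zero N T f \<Longrightarrow> loc_zero N T (g * f)"
  unfolding loc_zero_def
proof -
  assume i: "is_ideal N" and "\<exists>t. xS T ^ t * f \<in> N"
  then obtain t where "xS T ^ t * f \<in> N" by blast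
  then have "g * (xS T ^ t * f) \<in> N" using i ideal_mult by blast
  then show "\<exists>t. xS T ^ t * (g * f) \<in> N" by (metis mult.left_commute)
qed

lemma loc_zero_unmult: "loc_zero N T (xS T ^ m * f) \<Longrightarrow> loc_zero N T f"
  unfolding loc_zero_def by (metis mult.assoc power_add)

lemma common_t:
  fixes f :: "'v::finite set \<Rightarrow> ('v, 'k::comm_ring_1) mpoly"
  assumes i: "is_ideal J" and h: "\<forall>S. P S \<longrightarrow> loc_zero J S (f S)"
  shows "\<exists>t. \<forall>S. P S \<longrightarrow> xS S ^ t * f S \<in> J"
proof -
  obtain tf where tf: "\<forall>S. P S \<longrightarrow> xS S ^ tf S * f S \<in> J"
    using h unfolding loc_zero_def by metis
  define t0 where "t0 = Max (insert 0 (tf ` {S. P S}))"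
  have fin: "finite (insert 0 (tf ` {S. P S}))" by simp
  have "\<forall>S. P S \<longrightarrow> xS S ^ t0 * f S \<in> J"
  proof (intro allI impI)
    fix S :: "'v set" assume p: "P S"
    then have le: "tf S \<le> t0" unfolding t0_def using fin by (simp add: Max_ge)
    have "xS S ^ (t0 - tf S) * (xS S ^ tf S * f S) \<in> J" using tf p i ideal_mult by blast
    then show "xS S ^ t0 * f S \<in> J" using le
      by (metis le_add_diff_inverse2 mult.assoc power_add)
  qed
  then show ?thesis by blast
qed

lemma xS_remove:
  fixes T :: "'v::finite set"
  shows "v \<in> T \<Longrightarrow> (xS T :: ('v,'k::comm_ring_1) mpoly) = Var v * xS (T - {v})"
  unfolding xS_def by (simp add: prod.remove)

lemma cech_d_scale:
  fixes b :: "'v::{finite,linorder} set \<Rightarrow> ('v, 'k::comm_ring_1) mpoly"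
  shows "cech_d (\<lambda>S. xS S ^ m * b S) (l + m) T = xS T ^ m * cech_d b l T"
  unfolding cech_d_def sum_distrib_left
proof (rule sum.cong)
  fix v assume v: "v \<in> T"
  show "csgn v T * Var v ^ (l + m) * (xS (T - {v}) ^ m * b (T - {v})) =
        xS T ^ m * (csgn v T * Var v ^ l * b (T - {v}))"
    by (simp add: xS_remove[OF v] power_mult_distrib power_add algebra_simps)
qed simp

lemma cech_d_add:
  "cech_d (\<lambda>S. f S + g S) k T = cech_d f k T + cech_d g k T"
  unfolding cech_d_def by (simp add: sum.distrib algebra_simps)

lemma cech_d_diff:
  "cech_d (\<lambda>S. f S - g S) k T = cech_d f k T - cech_d g k T"
  unfolding cech_d_def by (simp add: sum_subtractf algebra_simps)

lemma csgn_swap: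
  fixes T :: "'v::{finite,linorder} set"
  assumes "v \<in> T" "w \<in> T" "v < w"
  shows "(csgn v T * csgn w (T - {v}) :: ('v,'k::comm_ring_1) mpoly) = - (csgn w T * csgn v (T - {w}))"
proof -
  have e1: "{u\<in>T - {w}. u < v} = {u\<in>T. u < v}" using assms by auto
  have e2: "{u\<in>T - {v}. u < w} = {u\<in>T. u < w} - {v}" by auto
  have vin: "v \<in> {u\<in>T. u < w}" using assms by auto
  have c2: "card {u\<in>T - {v}. u < w} = card {u\<in>T. u < w} - 1"
    unfolding e2 using vin by (simp add: card_Diff_singleton)
  have pos: "card {u\<in>T. u < w} \<ge> 1"
    using vin by (metis One_nat_def Suc_leI card_gt_0_iff empty_iff finite)
  then obtain b where b: "card {u\<in>T. u < w} = Suc b" by (metis Suc_le_D One_nat_def)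
  show ?thesis unfolding csgn_def e1 c2 b by simp
qed

lemma cech_dd:
  fixes c :: "'v::{finite,linorder} set \<Rightarrow> ('v, 'k::comm_ring_1) mpoly"
  shows "cech_d (\<lambda>S. cech_d c l S) l T = 0"
proof -
  define f where "f v w = csgn v T * Var v ^ l * (csgn w (T - {v}) * Var w ^ l * c (T - {v} - {w}))" for v w
  define P where "P = Sigma T (\<lambda>v. T - {v})"
  have "cech_d (\<lambda>S. cech_d c l S) l T = (\<Sum>v\<in>T. \<Sum>w\<in>T-{v}. f v w)"
    unfolding cech_d_def f_def by (simp add: sum_distrib_left)
  also have "\<dots> = (\<Sum>p\<in>P. f (fst p) (snd p))"
    unfolding P_def by (subst sum.Sigma) (auto simp: case_prod_beta)
  also have "\<dots> = (\<Sum>p\<in>{p\<in>P. fst p < snd p}. f (fst p) (snd p)) + (\<Sum>p\<in>{p\<in>P. snd p < fst p}. f (fst p) (snd p))"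
  proof -
    have "P = {p\<in>P. fst p < snd p} \<union> {p\<in>P. snd p < fst p}"
      unfolding P_def by (auto simp: neq_iff)
    moreover have "{p\<in>P. fst p < snd p} \<inter> {p\<in>P. snd p < fst p} = {}" by auto
    ultimately show ?thesis
      by (metis (no_types, lifting) finite sum.union_disjoint)
  qed
  also have "(\<Sum>p\<in>{p\<in>P. snd p < fst p}. f (fst p) (snd p)) = (\<Sum>p\<in>{p\<in>P. fst p < snd p}. f (snd p) (fst p))"
    by (rule sum.reindex_bij_witness[where i=prod.swap and j=prod.swap]) (auto simp: P_def)
  also have "\<dots> = (\<Sum>p\<in>{p\<in>P. fst p < snd p}. - f (fst p) (snd p))"
  proof (rule sum.cong)
    fix p assume p: "p \<in> {p\<in>P. fst p < snd p}"
    obtain v w where vw: "p = (v, w)" by force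
    have h: "v \<in> T" "w \<in> T" "v < w" using p vw by (auto simp: P_def)
    have e: "T - {w} - {v} = T - {v} - {w}" by auto
    have "f w v = (csgn w T * csgn v (T - {w})) * (Var v ^ l * Var w ^ l * c (T - {v} - {w}))"
      unfolding f_def e by (simp add: algebra_simps)
    also have "\<dots> = - (csgn v T * csgn w (T - {v})) * (Var v ^ l * Var w ^ l * c (T - {v} - {w}))"
      by (subst csgn_swap[OF h]) simp
    also have "\<dots> = - f v w" unfolding f_def by (simp add: algebra_simps)
    finally show "f (snd p) (fst p) = - f (fst p) (snd p)" using vw by simp
  qed simp
  finally show ?thesis by (simp add: sum_negf)
qed


lemma lemA:
  fixes A B C :: "('v::{finite,linorder},'k::comm_ring_1) mpoly set"
  assumes iA: "is_ideal A" and iB: "is_ideal B" and iC: "is_ideal C" and CB: "C \<subseteq> B" and BA: "B \<subseteq> A"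
  and nB: "\<not> local_cohom_nonzero j B C" and nA: "\<not> local_cohom_nonzero j A B"
  shows "\<not> local_cohom_nonzero j A C"
proof
  assume "local_cohom_nonzero j A C"
  then obtain a k where aA: "\<forall>S. card S = j \<longrightarrow> a S \<in> A"
    and acoc: "\<forall>T. card T = Suc j \<longrightarrow> loc_zero C T (cech_d a k T)"
    and ncb: "\<not> (\<exists>b l. (\<forall>S. card S + 1 = j \<longrightarrow> b S \<in> A) \<and> (\<forall>S. card S = j \<longrightarrow> loc_zero C S (xS S ^ l * a S - xS S ^ k * cech_d b l S)))"
    unfolding local_cohom_nonzero_def by blast
  have acoc': "\<forall>T. card T = Suc j \<longrightarrow> loc_zero B T (cech_d a k T)"
    using acoc CB loc_zero_mono by blast
  have "\<exists>b l. (\<forall>S. card S + 1 = j \<longrightarrow> b S \<in> A) \<and> (\<forall>S. card S = j \<longrightarrow> loc_zero B S (xS S ^ l * a S - xS S ^ k * cech_d b l S))"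
    using nA aA acoc' unfolding local_cohom_nonzero_def by blast
  then obtain b l where bA: "\<forall>S. card S + 1 = j \<longrightarrow> b S \<in> A"
    and bB: "\<forall>S. card S = j \<longrightarrow> loc_zero B S (xS S ^ l * a S - xS S ^ k * cech_d b l S)" by blast
  obtain t where t: "\<forall>S. card S = j \<longrightarrow> xS S ^ t * (xS S ^ l * a S - xS S ^ k * cech_d b l S) \<in> B"
    using common_t[OF iB bB] by blast
  define a' where "a' S = xS S ^ (t + l) * a S - xS S ^ (t + k) * cech_d b l S" for S :: "'v set"
  have a'B: "\<forall>S. card S = j \<longrightarrow> a' S \<in> B"
  proof (intro allI impI)
    fix S :: "'v set" assume "card S = j"
    then have "xS S ^ t * (xS S ^ l * a S - xS S ^ k * cech_d b l S) \<in> B" using t by blast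
    then show "a' S \<in> B" unfolding a'_def by (simp add: power_add algebra_simps)
  qed
  have da': "cech_d a' (k + (t + l)) T = xS T ^ (t + l) * cech_d a k T" for T :: "'v set"
  proof -
    have "cech_d a' (k + (t + l)) T = cech_d (\<lambda>S. xS S ^ (t + l) * a S) (k + (t + l)) T
        - cech_d (\<lambda>S. xS S ^ (t + k) * cech_d b l S) (l + (t + k)) T"
      unfolding a'_def cech_d_diff by (simp add: ac_simps)
    also have "\<dots> = xS T ^ (t + l) * cech_d a k T - xS T ^ (t + k) * cech_d (\<lambda>S. cech_d b l S) l T"
      by (simp only: cech_d_scale)
    finally show ?thesis by (simp add: cech_dd)
  qed
  have a'coc: "\<forall>T. card T = Suc j \<longrightarrow> loc_zero C T (cech_d a' (k + (t + l)) T)"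
    using acoc da' loc_zero_mult[OF iC] by metis
  have "\<exists>c l'. (\<forall>S. card S + 1 = j \<longrightarrow> c S \<in> B) \<and> (\<forall>S. card S = j \<longrightarrow> loc_zero C S (xS S ^ l' * a' S - xS S ^ (k + (t + l)) * cech_d c l' S))"
    using nB a'B a'coc unfolding local_cohom_nonzero_def by blast
  then obtain c l' where cB: "\<forall>S. card S + 1 = j \<longrightarrow> c S \<in> B"
    and cC: "\<forall>S. card S = j \<longrightarrow> loc_zero C S (xS S ^ l' * a' S - xS S ^ (k + (t + l)) * cech_d c l' S)" by blast
  define b2 where "b2 S = xS S ^ l' * b S + xS S ^ l * c S" for S :: "'v set"
  have db2: "cech_d b2 (l + l') S = xS S ^ l' * cech_d b l S + xS S ^ l * cech_d c l' S" for S :: "'v set"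
  proof -
    have "cech_d b2 (l + l') S = cech_d (\<lambda>S. xS S ^ l' * b S) (l + l') S + cech_d (\<lambda>S. xS S ^ l * c S) (l' + l) S"
      unfolding b2_def cech_d_add by (simp add: ac_simps)
    then show ?thesis by (simp only: cech_d_scale)
  qed
  have "(\<forall>S. card S + 1 = j \<longrightarrow> b2 S \<in> A) \<and> (\<forall>S. card S = j \<longrightarrow> loc_zero C S (xS S ^ (l + l') * a S - xS S ^ k * cech_d b2 (l + l') S))"
  proof (intro conjI allI impI)
    fix S :: "'v set" assume "card S + 1 = j"
    then have "b S \<in> A" "c S \<in> A" using bA cB BA by auto
    then show "b2 S \<in> A" unfolding b2_def using iA ideal_mult ideal_add by blast
  next
    fix S :: "'v set" assume "card S = j"
    then have h: "loc_zero C S (xS S ^ l' * a' S - xS S ^ (k + (t + l)) * cech_d c l' S)" using cC by blast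
    have "xS S ^ l' * a' S - xS S ^ (k + (t + l)) * cech_d c l' S
       = xS S ^ t * (xS S ^ (l + l') * a S - xS S ^ k * cech_d b2 (l + l') S)"
      unfolding db2 a'_def by (simp add: power_add algebra_simps)
    then show "loc_zero C S (xS S ^ (l + l') * a S - xS S ^ k * cech_d b2 (l + l') S)"
      using h loc_zero_unmult by metis
  qed
  then show False using ncb by blast
qed

lemma lemB0:
  fixes A B C :: "('v::{finite,linorder},'k::comm_ring_1) mpoly set"
  assumes BA: "B \<subseteq> A" and nA: "\<not> local_cohom_nonzero 0 A C"
  shows "\<not> local_cohom_nonzero 0 B C"
  using assms unfolding local_cohom_nonzero_def by (metis add_is_0 one_neq_zero subsetD)

lemma lemB:
  fixes A B C :: "('v::{finite,linorder},'k::comm_ring_1) mpoly set"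
  assumes iA: "is_ideal A" and iB: "is_ideal B" and iC: "is_ideal C" and CB: "C \<subseteq> B" and BA: "B \<subseteq> A"
  and nA: "\<not> local_cohom_nonzero (Suc j) A C" and nAB: "\<not> local_cohom_nonzero j A B"
  shows "\<not> local_cohom_nonzero (Suc j) B C"
proof
  assume "local_cohom_nonzero (Suc j) B C"
  then obtain a k where aB: "\<forall>S. card S = Suc j \<longrightarrow> a S \<in> B"
    and acoc: "\<forall>T. card T = Suc (Suc j) \<longrightarrow> loc_zero C T (cech_d a k T)"
    and ncb: "\<not> (\<exists>b l. (\<forall>S. card S + 1 = Suc j \<longrightarrow> b S \<in> B) \<and> (\<forall>S. card S = Suc j \<longrightarrow> loc_zero C S (xS S ^ l * a S - xS S ^ k * cech_d b l S)))"
    unfolding local_cohom_nonzero_def by blast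
  have aA: "\<forall>S. card S = Suc j \<longrightarrow> a S \<in> A" using aB BA by blast
  have "\<exists>b l. (\<forall>S. card S + 1 = Suc j \<longrightarrow> b S \<in> A) \<and> (\<forall>S. card S = Suc j \<longrightarrow> loc_zero C S (xS S ^ l * a S - xS S ^ k * cech_d b l S))"
    using nA aA acoc unfolding local_cohom_nonzero_def by blast
  then obtain b l where bA: "\<forall>S. card S + 1 = Suc j \<longrightarrow> b S \<in> A"
    and bC: "\<forall>S. card S = Suc j \<longrightarrow> loc_zero C S (xS S ^ l * a S - xS S ^ k * cech_d b l S)" by blast
  have bA': "\<forall>S. card S = j \<longrightarrow> b S \<in> A" using bA by simp
  have bcoc: "\<forall>T. card T = Suc j \<longrightarrow> loc_zero B T (cech_d b l T)"
  proof (intro allI impI)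
    fix T :: "'v set" assume cT: "card T = Suc j"
    then obtain s where s: "xS T ^ s * (xS T ^ l * a T - xS T ^ k * cech_d b l T) \<in> C"
      using bC unfolding loc_zero_def by blast
    have s': "xS T ^ s * (xS T ^ l * a T - xS T ^ k * cech_d b l T) \<in> B" using s CB by blast
    have "xS T ^ (s + l) * a T \<in> B" using aB cT iB ideal_mult by blast
    then have "xS T ^ (s + l) * a T - xS T ^ s * (xS T ^ l * a T - xS T ^ k * cech_d b l T) \<in> B"
      using s' iB ideal_diff by blast
    moreover have "xS T ^ (s + l) * a T - xS T ^ s * (xS T ^ l * a T - xS T ^ k * cech_d b l T)
        = xS T ^ (s + k) * cech_d b l T" by (simp add: power_add algebra_simps)
    ultimately show "loc_zero B T (cech_d b l T)" unfolding loc_zero_def by metis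
  qed
  have "\<exists>c l'. (\<forall>S. card S + 1 = j \<longrightarrow> c S \<in> A) \<and> (\<forall>S. card S = j \<longrightarrow> loc_zero B S (xS S ^ l' * b S - xS S ^ l * cech_d c l' S))"
    using nAB bA' bcoc unfolding local_cohom_nonzero_def by blast
  then obtain c l' where cB: "\<forall>S. card S = j \<longrightarrow> loc_zero B S (xS S ^ l' * b S - xS S ^ l * cech_d c l' S)" by blast
  obtain t where t: "\<forall>S. card S = j \<longrightarrow> xS S ^ t * (xS S ^ l' * b S - xS S ^ l * cech_d c l' S) \<in> B"
    using common_t[OF iB cB] by blast
  define b' where "b' S = xS S ^ (t + l') * b S - xS S ^ (t + l) * cech_d c l' S" for S :: "'v set"
  have b'B: "\<forall>S. card S + 1 = Suc j \<longrightarrow> b' S \<in> B"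
  proof (intro allI impI)
    fix S :: "'v set" assume "card S + 1 = Suc j"
    then have "xS S ^ t * (xS S ^ l' * b S - xS S ^ l * cech_d c l' S) \<in> B" using t by simp
    then show "b' S \<in> B" unfolding b'_def by (simp add: power_add algebra_simps)
  qed
  have db': "cech_d b' (l + (t + l')) T = xS T ^ (t + l') * cech_d b l T" for T :: "'v set"
  proof -
    have "cech_d b' (l + (t + l')) T = cech_d (\<lambda>S. xS S ^ (t + l') * b S) (l + (t + l')) T
        - cech_d (\<lambda>S. xS S ^ (t + l) * cech_d c l' S) (l' + (t + l)) T"
      unfolding b'_def cech_d_diff by (simp add: ac_simps)
    also have "\<dots> = xS T ^ (t + l') * cech_d b l T - xS T ^ (t + l) * cech_d (\<lambda>S. cech_d c l' S) l' T"
      by (simp only: cech_d_scale)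
    finally show ?thesis by (simp add: cech_dd)
  qed
  have "\<forall>S. card S = Suc j \<longrightarrow> loc_zero C S (xS S ^ (l + (t + l')) * a S - xS S ^ k * cech_d b' (l + (t + l')) S)"
  proof (intro allI impI)
    fix S :: "'v set" assume "card S = Suc j"
    then have h: "loc_zero C S (xS S ^ l * a S - xS S ^ k * cech_d b l S)" using bC by blast
    have "xS S ^ (l + (t + l')) * a S - xS S ^ k * cech_d b' (l + (t + l')) S
       = xS S ^ (t + l') * (xS S ^ l * a S - xS S ^ k * cech_d b l S)"
      unfolding db' by (simp add: power_add algebra_simps)
    then show "loc_zero C S (xS S ^ (l + (t + l')) * a S - xS S ^ k * cech_d b' (l + (t + l')) S)"
      using h loc_zero_mult[OF iC] by metis
  qed
  then show False using ncb b'B by blast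
qed


lemma depth_ge:
  assumes "\<And>j. enat j < d \<Longrightarrow> \<not> local_cohom_nonzero j N N'"
  shows "d \<le> depth_quot N N'"
proof (cases "\<exists>i. local_cohom_nonzero i N N'")
  case True
  then have h: "local_cohom_nonzero (LEAST i. local_cohom_nonzero i N N') N N'" by (rule LeastI_ex)
  have "\<not> enat (LEAST i. local_cohom_nonzero i N N') < d" using assms h by blast
  then show ?thesis using True unfolding depth_quot_def by (simp add: not_less)
qed (simp add: depth_quot_def)

lemma depth_lt:
  assumes "enat j < depth_quot N N'"
  shows "\<not> local_cohom_nonzero j N N'"
proof
  assume h: "local_cohom_nonzero j N N'"
  then have "depth_quot N N' = enat (LEAST i. local_cohom_nonzero i N N')"
    unfolding depth_quot_def by auto
  moreover have "(LEAST i. local_cohom_nonzero i N N') \<le> j" using h by (rule Least_le)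
  ultimately show False using assms by simp
qed

lemma is_ideal_pow: "is_ideal (ideal_pow I i)"
proof (cases i)
  case 0 then show ?thesis by (simp add: is_ideal_def)
next
  case (Suc n) then show ?thesis
    by (simp add: is_ideal_def ideal_gen_def)
qed

lemma ideal_pow_mono: "ideal_pow I (Suc i) \<subseteq> ideal_pow I i"
proof -
  have "{a * b |a b. a \<in> ideal_pow I i \<and> b \<in> I} \<subseteq> ideal_pow I i"
    using is_ideal_pow ideal_mult2 by blast
  then show ?thesis using is_ideal_pow[of I i] by (auto simp: ideal_gen_def)
qed

lemma no_cohom_UNIV: "\<not> local_cohom_nonzero j UNIV UNIV"
  unfolding local_cohom_nonzero_def loc_zero_def by blast

theorem lemma4p4:
  fixes I :: "('v::{finite,linorder}, 'k::field) mpoly set"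
  assumes "homogeneous_ideal I" and "I \<noteq> {0}" and "I \<noteq> UNIV"
  shows "(INF i\<in>{1..}. depth_quot UNIV (ideal_pow I i))
       = (INF i\<in>{1..}. depth_quot (ideal_pow I (i - 1)) (ideal_pow I i))"
proof -
  define M where "M i = depth_quot UNIV (ideal_pow I i)" for i
  define K where "K i = depth_quot (ideal_pow I (i - 1)) (ideal_pow I i)" for i
  have M0: "M 0 = \<infinity>"
    unfolding M_def depth_quot_def by (simp add: no_cohom_UNIV)
  have F1: "min (K (Suc n)) (M n) \<le> M (Suc n)" for n
    unfolding M_def K_def
  proof (rule depth_ge)
    fix j assume "enat j < min (depth_quot (ideal_pow I (Suc n - 1)) (ideal_pow I (Suc n))) (depth_quot UNIV (ideal_pow I n))"
    then have a: "\<not> local_cohom_nonzero j (ideal_pow I n) (ideal_pow I (Suc n))"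
      and b: "\<not> local_cohom_nonzero j UNIV (ideal_pow I n)" using depth_lt by auto
    show "\<not> local_cohom_nonzero j UNIV (ideal_pow I (Suc n))"
      by (rule lemA[OF _ is_ideal_pow is_ideal_pow ideal_pow_mono _ a b]) (auto simp: is_ideal_def)
  qed
  have F2: "min (M (Suc n)) (M n) \<le> K (Suc n)" for n
    unfolding M_def K_def
  proof (rule depth_ge)
    fix j assume h: "enat j < min (depth_quot UNIV (ideal_pow I (Suc n))) (depth_quot UNIV (ideal_pow I n))"
    show "\<not> local_cohom_nonzero j (ideal_pow I (Suc n - 1)) (ideal_pow I (Suc n))"
    proof (cases j)
      case 0
      then have "\<not> local_cohom_nonzero 0 UNIV (ideal_pow I (Suc n))" using h depth_lt by auto
      then show ?thesis using 0 lemB0[of "ideal_pow I n" UNIV] by simp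
    next
      case (Suc j')
      have a: "\<not> local_cohom_nonzero (Suc j') UNIV (ideal_pow I (Suc n))" using h Suc depth_lt by auto
      have "enat j' < enat j" using Suc by simp
      then have b: "\<not> local_cohom_nonzero j' UNIV (ideal_pow I n)" using h depth_lt
        by (meson min.strict_boundedE order.strict_trans)
      have "\<not> local_cohom_nonzero (Suc j') (ideal_pow I n) (ideal_pow I (Suc n))"
        by (rule lemB[OF _ is_ideal_pow is_ideal_pow ideal_pow_mono _ a b]) (auto simp: is_ideal_def)
      then show ?thesis unfolding Suc by simp
    qed
  qed
  define L where "L = (INF i\<in>{1..}. M i)"
  define R where "R = (INF i\<in>{1..}. K i)"
  have RM: "R \<le> M (Suc n)" for n
  proof (induction n)
    case 0
    have "R \<le> K (Suc 0)" unfolding R_def by (rule INF_lower) simp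
    then show ?case using F1[of 0] M0 by simp
  next
    case (Suc n)
    have "R \<le> K (Suc (Suc n))" unfolding R_def by (rule INF_lower) simp
    then have "R \<le> min (K (Suc (Suc n))) (M (Suc n))" using Suc by simp
    then show ?case using F1[of "Suc n"] by (rule order.trans)
  qed
  have "R \<le> L" unfolding L_def
  proof (rule INF_greatest)
    fix i :: nat assume "i \<in> {1..}"
    then obtain n where "i = Suc n" by (metis atLeast_iff not0_implies_Suc not_one_le_zero)
    then show "R \<le> M i" using RM by simp
  qed
  moreover have "L \<le> R" unfolding R_def
  proof (rule INF_greatest)
    fix i :: nat assume "i \<in> {1..}"
    then obtain n where n: "i = Suc n" by (metis atLeast_iff not0_implies_Suc not_one_le_zero)
    have "L \<le> M (Suc n)" unfolding L_def by (rule INF_lower) simp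
    moreover have "L \<le> M n"
    proof (cases n)
      case 0 then show ?thesis using M0 by simp
    next
      case (Suc m) then show ?thesis unfolding L_def by (intro INF_lower) simp
    qed
    ultimately have "L \<le> min (M (Suc n)) (M n)" by simp
    then show "L \<le> K i" using F2[of n] n by (metis min.bounded_iff order.trans)
  qed
  ultimately show ?thesis unfolding L_def R_def M_def K_def by simp
qed

end
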